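(* For any thresholds $a_{ij}$, the adaptive matrix SPRT $\hat D=(\hat T,\hat d)$ satisfies $$\sup_{\theta\in\Theta_i}\mathsf P_\theta(\hat d=j)\le e^{-a_{ij}}\quad\text{for all }i,j\in\mathcal N_0,\ i\ne j.$$ In particular, if $a_{ij}=\log(1/\alpha_{ij})$ then $\hat D\in\mathbb C(\boldsymbol\alpha)$.
   Context: Observations $X_1,X_2,\dots$ with probability measures $\{\mathsf P_\theta,\theta\in\Theta\}$, $\Theta\subseteq\mathbb R^l$; $\mathcal F_n=\sigma(X_1,\dots,X_n)$, $\mathbf X_1^n=(X_1,\dots,X_n)$. The restriction of $\mathsf P_\theta$ to $\mathcal F_n$ has density $p_{\theta,n}(\mathbf X_1^n)=\prod_{t=1}^n f_{\theta,t}(X_t\mid\mathbf X_1^{t-1})$ w.r.t. a $\sigma$-finite measure (each $f_{\theta,t}(\cdot\mid\mathbf X_1^{t-1})$ a conditional density), and these restrictions are mutually absolutely continuous across $\theta$. $\Theta$ is the disjoint union of $\Theta_0,\dots,\Theta_N$ ($N\ge1$) and an indifference zone $\Theta_{\rm in}$ (possibly empty); $\mathcal N_0=\{0,\dots,N\}$. A test $D=(T,d)$: stopping time $T$ w.r.t. $(\mathcal F_n)$ and $\mathcal F_T$-measurable $d\in\mathcal N_0$. $\mathbb C(\boldsymbol\alpha)=\{D:\sup_{\theta\in\Theta_i}\mathsf P_\theta(d=j)\le\alpha_{ij}\ \forall i\ne j\}$. Let $\hat\theta_n=\hat\theta_n(\mathbf X_1^n)$ be $\mathcal F_n$-measurable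 estimators with values in $\Theta$, with a deterministic initial value $\hat\theta_0$. Define $\hat\Lambda_i^*(n)=\prod_{t=1}^n f_{\hat\theta_{t-1},t}(X_t\mid\mathbf X_1^{t-1})\big/\sup_{\theta\in\Theta_i}\prod_{t=1}^n f_{\theta,t}(X_t\mid\mathbf X_1^{t-1})$ and $\hat\lambda_i^*(n)=\log\hat\Lambda_i^*(n)$. Adaptive matrix SPRT (AMSPRT): given thresholds $a_{ij}$, $\hat T_i=\inf\{n\ge1:\hat\lambda_j^*(n)\ge a_{ji}\text{ for all }j\in\mathcal N_0\setminus i\}$, $\hat T=\min_k\hat T_k$, $\hat d=i$ if $\hat T=\hat T_i$ (ties broken by any fixed rule). *)

theory Defs
  imports "HOL-Probability.Probability"
begin

text \<open>Observation paths are functions x :: nat => 'a; x t is the observation X_t (t >= 1).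
  The history X_1^{t-1} is represented by restrict x {1..<t}.\<close>

definition lik :: "('p \<Rightarrow> nat \<Rightarrow> (nat \<Rightarrow> 'a) \<Rightarrow> 'a \<Rightarrow> real) \<Rightarrow> 'p \<Rightarrow> nat \<Rightarrow> (nat \<Rightarrow> 'a) \<Rightarrow> ennreal" where
  "lik f \<theta> n x = (\<Prod>t\<in>{1..n}. ennreal (f \<theta> t (restrict x {1..<t}) (x t)))"

definition adapt_lik :: "('p \<Rightarrow> nat \<Rightarrow> (nat \<Rightarrow> 'a) \<Rightarrow> 'a \<Rightarrow> real) \<Rightarrow> (nat \<Rightarrow> (nat \<Rightarrow> 'a) \<Rightarrow> 'p)
    \<Rightarrow> nat \<Rightarrow> (nat \<Rightarrow> 'a) \<Rightarrow> ennreal" where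
  "adapt_lik f est n x =
     (\<Prod>t\<in>{1..n}. ennreal (f (est (t - 1) (restrict x {1..<t})) t (restrict x {1..<t}) (x t)))"

text \<open>hat Lambda_i^*(n) (ennreal division: c/0 = infinity for c > 0, 0/0 = 0)\<close>
definition Lambda_hat :: "('p \<Rightarrow> nat \<Rightarrow> (nat \<Rightarrow> 'a) \<Rightarrow> 'a \<Rightarrow> real) \<Rightarrow> (nat \<Rightarrow> (nat \<Rightarrow> 'a) \<Rightarrow> 'p)
    \<Rightarrow> 'p set \<Rightarrow> nat \<Rightarrow> (nat \<Rightarrow> 'a) \<Rightarrow> ennreal" where
  "Lambda_hat f est \<Theta>i n x = adapt_lik f est n x / (SUP \<theta>\<in>\<Theta>i. lik f \<theta> n x)"

definition ln_ennreal :: "ennreal \<Rightarrow> ereal" where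
  "ln_ennreal y = (if y = 0 then -\<infinity> else if y = \<top> then \<infinity> else ereal (ln (enn2real y)))"

definition lambda_hat :: "('p \<Rightarrow> nat \<Rightarrow> (nat \<Rightarrow> 'a) \<Rightarrow> 'a \<Rightarrow> real) \<Rightarrow> (nat \<Rightarrow> (nat \<Rightarrow> 'a) \<Rightarrow> 'p)
    \<Rightarrow> 'p set \<Rightarrow> nat \<Rightarrow> (nat \<Rightarrow> 'a) \<Rightarrow> ereal" where
  "lambda_hat f est \<Theta>i n x = ln_ennreal (Lambda_hat f est \<Theta>i n x)"

text \<open>hat T_i = inf{n >= 1 : hat lambda_j^*(n) >= a_{ji} for all j in N_0 - {i}}, inf {} = infinity\<close>
definition amsprt_Ti :: "('p \<Rightarrow> nat \<Rightarrow> (nat \<Rightarrow> 'a) \<Rightarrow> 'a \<Rightarrow> real) \<Rightarrow> (nat \<Rightarrow> (nat \<Rightarrow> 'a) \<Rightarrow> 'p)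
    \<Rightarrow> (nat \<Rightarrow> 'p set) \<Rightarrow> nat \<Rightarrow> (nat \<Rightarrow> nat \<Rightarrow> real) \<Rightarrow> nat \<Rightarrow> (nat \<Rightarrow> 'a) \<Rightarrow> enat" where
  "amsprt_Ti f est \<Theta>s N a i x =
     (INF n\<in>{n. 1 \<le> n \<and> (\<forall>j\<in>{0..N} - {i}. lambda_hat f est (\<Theta>s j) n x \<ge> ereal (a j i))}. enat n)"

definition amsprt_T :: "('p \<Rightarrow> nat \<Rightarrow> (nat \<Rightarrow> 'a) \<Rightarrow> 'a \<Rightarrow> real) \<Rightarrow> (nat \<Rightarrow> (nat \<Rightarrow> 'a) \<Rightarrow> 'p)
    \<Rightarrow> (nat \<Rightarrow> 'p set) \<Rightarrow> nat \<Rightarrow> (nat \<Rightarrow> nat \<Rightarrow> real) \<Rightarrow> (nat \<Rightarrow> 'a) \<Rightarrow> enat" where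
  "amsprt_T f est \<Theta>s N a x = Min ((\<lambda>k. amsprt_Ti f est \<Theta>s N a k x) ` {0..N})"

definition amsprt_d :: "(nat set \<Rightarrow> nat) \<Rightarrow> ('p \<Rightarrow> nat \<Rightarrow> (nat \<Rightarrow> 'a) \<Rightarrow> 'a \<Rightarrow> real) \<Rightarrow> (nat \<Rightarrow> (nat \<Rightarrow> 'a) \<Rightarrow> 'p)
    \<Rightarrow> (nat \<Rightarrow> 'p set) \<Rightarrow> nat \<Rightarrow> (nat \<Rightarrow> nat \<Rightarrow> real) \<Rightarrow> (nat \<Rightarrow> 'a) \<Rightarrow> nat" where
  "amsprt_d tb f est \<Theta>s N a x =
     tb {k\<in>{0..N}. amsprt_Ti f est \<Theta>s N a k x = amsprt_T f est \<Theta>s N a x}"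

text \<open>Error-probability condition defining the class C(alpha); decision d = j is only made
  on the event T < infinity.\<close>
definition in_class :: "('p \<Rightarrow> 'o measure) \<Rightarrow> (nat \<Rightarrow> 'p set) \<Rightarrow> nat \<Rightarrow> (nat \<Rightarrow> nat \<Rightarrow> real)
    \<Rightarrow> ('o \<Rightarrow> enat) \<Rightarrow> ('o \<Rightarrow> nat) \<Rightarrow> bool" where
  "in_class P \<Theta>s N \<alpha> T d \<longleftrightarrow>
     (\<forall>i\<in>{0..N}. \<forall>j\<in>{0..N}. i \<noteq> j \<longrightarrow>
        (SUP \<theta>\<in>\<Theta>s i. emeasure (P \<theta>) {\<omega>\<in>space (P \<theta>). T \<omega> < \<infinity> \<and> d \<omega> = j}) \<le> ennreal (\<alpha> i j))"

end

theory Submission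
  imports Defs
begin

lemma adapt_lik_meas:
  fixes f :: "'p::topological_space \<Rightarrow> nat \<Rightarrow> (nat \<Rightarrow> 'a) \<Rightarrow> 'a \<Rightarrow> real"
  assumes f_meas: "\<forall>t. (\<lambda>(\<theta>, h, x). f \<theta> t h x)
                   \<in> borel_measurable (borel \<Otimes>\<^sub>M (PiM {1..<t} (\<lambda>_. M) \<Otimes>\<^sub>M M))"
    and est_meas: "\<forall>n. est n \<in> PiM {1..n} (\<lambda>_. M) \<rightarrow>\<^sub>M borel"
  shows "adapt_lik f est n \<in> borel_measurable (PiM {1..n} (\<lambda>_. M))"
proof -
  have "(\<lambda>x. ennreal (f (est (t - 1) (restrict x {1..<t})) t (restrict x {1..<t}) (x t)))
     \<in> borel_measurable (PiM {1..n} (\<lambda>_. M))" if t: "t \<in> {1..n}" for t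
  proof -
    have e: "{1..t-1} = {1..<t}" using t by auto
    have em: "est (t-1) \<in> PiM {1..<t} (\<lambda>_. M) \<rightarrow>\<^sub>M borel" using est_meas e by metis
    have r: "(\<lambda>x. restrict x {1..<t}) \<in> PiM {1..n} (\<lambda>_. M) \<rightarrow>\<^sub>M PiM {1..<t} (\<lambda>_. M)"
      by (rule measurable_restrict_subset) (use t in auto)
    have c: "(\<lambda>x::nat\<Rightarrow>'a. x t) \<in> PiM {1..n} (\<lambda>_. M) \<rightarrow>\<^sub>M M"
      using measurable_component_singleton[OF t] by simp
    have "(\<lambda>x. (est (t - 1) (restrict x {1..<t}), restrict x {1..<t}, x t))
        \<in> PiM {1..n} (\<lambda>_. M) \<rightarrow>\<^sub>M (borel \<Otimes>\<^sub>M (PiM {1..<t} (\<lambda>_. M) \<Otimes>\<^sub>M M))"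
      by (intro measurable_Pair measurable_compose[OF r em] r c)
    from measurable_compose[OF this f_meas[rule_format, of t]]
    show ?thesis by simp
  qed
  then show ?thesis unfolding adapt_lik_def[abs_def]
    by (intro borel_measurable_prod_ennreal) auto
qed

lemma lik_meas:
  fixes f :: "'p::topological_space \<Rightarrow> nat \<Rightarrow> (nat \<Rightarrow> 'a) \<Rightarrow> 'a \<Rightarrow> real"
  assumes f_meas: "\<forall>t. (\<lambda>(\<theta>, h, x). f \<theta> t h x)
                   \<in> borel_measurable (borel \<Otimes>\<^sub>M (PiM {1..<t} (\<lambda>_. M) \<Otimes>\<^sub>M M))"
  shows "lik f \<theta> n \<in> borel_measurable (PiM {1..n} (\<lambda>_. M))"
proof -
  have "(\<lambda>x. ennreal (f \<theta> t (restrict x {1..<t}) (x t)))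
     \<in> borel_measurable (PiM {1..n} (\<lambda>_. M))" if t: "t \<in> {1..n}" for t
  proof -
    have r: "(\<lambda>x. restrict x {1..<t}) \<in> PiM {1..n} (\<lambda>_. M) \<rightarrow>\<^sub>M PiM {1..<t} (\<lambda>_. M)"
      by (rule measurable_restrict_subset) (use t in auto)
    have c: "(\<lambda>x::nat\<Rightarrow>'a. x t) \<in> PiM {1..n} (\<lambda>_. M) \<rightarrow>\<^sub>M M"
      using measurable_component_singleton[OF t] by simp
    have "(\<lambda>x. (\<theta>, restrict x {1..<t}, x t))
        \<in> PiM {1..n} (\<lambda>_. M) \<rightarrow>\<^sub>M (borel \<Otimes>\<^sub>M (PiM {1..<t} (\<lambda>_. M) \<Otimes>\<^sub>M M))"
      by (intro measurable_Pair measurable_const r c) simp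
    from measurable_compose[OF this f_meas[rule_format, of t]]
    show ?thesis by simp
  qed
  then show ?thesis unfolding lik_def[abs_def]
    by (intro borel_measurable_prod_ennreal) auto
qed

lemma adapt_lik_restrict:
  assumes "k \<le> n" shows "adapt_lik f est k (restrict x {1..n}) = adapt_lik f est k x"
  unfolding adapt_lik_def
proof (rule prod.cong[OF refl])
  fix t assume t: "t \<in> {1..k}"
  have "restrict (restrict x {1..n}) {1..<t} = restrict x {1..<t}"
    using t assms by (auto simp: restrict_def fun_eq_iff)
  moreover have "restrict x {1..n} t = x t" using t assms by auto
  ultimately show "ennreal (f (est (t - 1) (restrict (restrict x {1..n}) {1..<t})) t
          (restrict (restrict x {1..n}) {1..<t}) (restrict x {1..n} t)) =
         ennreal (f (est (t - 1) (restrict x {1..<t})) t (restrict x {1..<t}) (x t))" by simp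
qed

lemma lik_restrict:
  assumes "k \<le> n" shows "lik f \<theta> k (restrict x {1..n}) = lik f \<theta> k x"
  unfolding lik_def
proof (rule prod.cong[OF refl])
  fix t assume t: "t \<in> {1..k}"
  have "restrict (restrict x {1..n}) {1..<t} = restrict x {1..<t}"
    using t assms by (auto simp: restrict_def fun_eq_iff)
  moreover have "restrict x {1..n} t = x t" using t assms by auto
  ultimately show "ennreal (f \<theta> t (restrict (restrict x {1..n}) {1..<t}) (restrict x {1..n} t)) =
         ennreal (f \<theta> t (restrict x {1..<t}) (x t))" by simp
qed

lemma Lambda_hat_restrict:
  assumes "k \<le> n" shows "Lambda_hat f est Th k (restrict x {1..n}) = Lambda_hat f est Th k x"
  unfolding Lambda_hat_def adapt_lik_restrict[OF assms] lik_restrict[OF assms] ..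

lemma adapt_lik_Suc:
  assumes x: "x \<in> extensional {1..m}"
  shows "adapt_lik f est (Suc m) (x(Suc m := y)) =
     adapt_lik f est m x * ennreal (f (est m x) (Suc m) x y)"
proof -
  have "{1..Suc m} = insert (Suc m) {1..m}" by auto
  then have "adapt_lik f est (Suc m) (x(Suc m := y)) =
     ennreal (f (est (Suc m - 1) (restrict (x(Suc m := y)) {1..<Suc m})) (Suc m)
        (restrict (x(Suc m := y)) {1..<Suc m}) ((x(Suc m := y)) (Suc m))) *
     (\<Prod>t\<in>{1..m}. ennreal (f (est (t - 1) (restrict (x(Suc m := y)) {1..<t})) t
        (restrict (x(Suc m := y)) {1..<t}) ((x(Suc m := y)) t)))"
    unfolding adapt_lik_def by simp
  also have "(\<Prod>t\<in>{1..m}. ennreal (f (est (t - 1) (restrict (x(Suc m := y)) {1..<t})) t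
        (restrict (x(Suc m := y)) {1..<t}) ((x(Suc m := y)) t))) = adapt_lik f est m x"
    unfolding adapt_lik_def
  proof (rule prod.cong[OF refl])
    fix t assume t: "t \<in> {1..m}"
    have "restrict (x(Suc m := y)) {1..<t} = restrict x {1..<t}"
      using t by (auto simp: restrict_def fun_eq_iff)
    then show "ennreal (f (est (t - 1) (restrict (x(Suc m := y)) {1..<t})) t
        (restrict (x(Suc m := y)) {1..<t}) ((x(Suc m := y)) t)) =
       ennreal (f (est (t - 1) (restrict x {1..<t})) t (restrict x {1..<t}) (x t))"
      using t by simp
  qed
  also have "restrict (x(Suc m := y)) {1..<Suc m} = x"
    using x by (auto simp: restrict_def fun_eq_iff extensional_def)
  finally show ?thesis by (simp add: mult.commute fun_upd_def)
qed

lemma one_step: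
  fixes f :: "'p::topological_space \<Rightarrow> nat \<Rightarrow> (nat \<Rightarrow> 'a) \<Rightarrow> 'a \<Rightarrow> real"
  assumes nu_sf: "\<forall>t. sigma_finite_measure (\<nu> t) \<and> sets (\<nu> t) = sets M"
    and f_nonneg: "\<forall>\<theta> t h x. 0 \<le> f \<theta> t h x"
    and f_meas: "\<forall>t. (\<lambda>(\<theta>, h, x). f \<theta> t h x)
                   \<in> borel_measurable (borel \<Otimes>\<^sub>M (PiM {1..<t} (\<lambda>_. M) \<Otimes>\<^sub>M M))"
    and f_cond_density: "\<forall>\<theta>\<in>\<Theta>. \<forall>t. \<forall>h\<in>space (PiM {1..<t} (\<lambda>_. M)).
                   (\<integral>\<^sup>+ x. ennreal (f \<theta> t h x) \<partial>\<nu> t) = 1"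
    and est_meas: "\<forall>n. est n \<in> PiM {1..n} (\<lambda>_. M) \<rightarrow>\<^sub>M borel"
    and est_range: "\<forall>n y. est n y \<in> \<Theta>"
    and A: "A \<in> sets (PiM {1..m} (\<lambda>_. M))"
  shows "emeasure (density (PiM {1..Suc m} \<nu>) (adapt_lik f est (Suc m)))
            {x \<in> space (PiM {1..Suc m} \<nu>). restrict x {1..m} \<in> A}
       = emeasure (density (PiM {1..m} \<nu>) (adapt_lik f est m)) A"
proof -
  interpret product_sigma_finite \<nu>
    unfolding product_sigma_finite_def using nu_sf by auto
  have setsP: "sets (PiM I \<nu>) = sets (PiM I (\<lambda>_. M))" for I
    by (rule sets_PiM_cong) (use nu_sf in auto)
  have spP: "space (PiM I \<nu>) = space (PiM I (\<lambda>_. M))" for I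
    using sets_eq_imp_space_eq[OF setsP] .
  have measP: "g \<in> borel_measurable (PiM I \<nu>) \<longleftrightarrow> g \<in> borel_measurable (PiM I (\<lambda>_. M))" for g :: "_ \<Rightarrow> ennreal" and I
    using measurable_cong_sets[OF setsP refl] by blast
  have am: "adapt_lik f est n \<in> borel_measurable (PiM {1..n} \<nu>)" for n
    using adapt_lik_meas[OF f_meas est_meas] measP by blast
  have Am: "A \<in> sets (PiM {1..m} \<nu>)" using A setsP by simp
  have r: "(\<lambda>x. restrict x {1..m}) \<in> PiM {1..Suc m} \<nu> \<rightarrow>\<^sub>M PiM {1..m} \<nu>"
    by (rule measurable_restrict_subset) auto
  have Sm: "{x \<in> space (PiM {1..Suc m} \<nu>). restrict x {1..m} \<in> A} \<in> sets (PiM {1..Suc m} \<nu>)"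
    using measurable_sets[OF r Am] by (simp add: vimage_def Int_def conj_commute)
  have ins: "{1..Suc m} = insert (Suc m) {1..m}" by auto
  have "emeasure (density (PiM {1..Suc m} \<nu>) (adapt_lik f est (Suc m)))
            {x \<in> space (PiM {1..Suc m} \<nu>). restrict x {1..m} \<in> A}
     = (\<integral>\<^sup>+ x. adapt_lik f est (Suc m) x * indicator {x \<in> space (PiM {1..Suc m} \<nu>). restrict x {1..m} \<in> A} x \<partial>PiM {1..Suc m} \<nu>)"
    by (rule emeasure_density[OF am Sm])
  also have "\<dots> = (\<integral>\<^sup>+ x. adapt_lik f est (Suc m) x * indicator {x \<in> space (PiM (insert (Suc m) {1..m}) \<nu>). restrict x {1..m} \<in> A} x \<partial>PiM (insert (Suc m) {1..m}) \<nu>)"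
    unfolding ins ..
  also have "\<dots> = (\<integral>\<^sup>+ x. (\<integral>\<^sup>+ y. adapt_lik f est (Suc m) (x(Suc m := y)) * indicator {x \<in> space (PiM (insert (Suc m) {1..m}) \<nu>). restrict x {1..m} \<in> A} (x(Suc m := y)) \<partial>\<nu> (Suc m)) \<partial>PiM {1..m} \<nu>)"
    apply (rule product_nn_integral_insert)
      apply simp apply simp
    apply (intro borel_measurable_times_ennreal borel_measurable_indicator)
    using am[of "Suc m"] Sm ins by auto
  also have "\<dots> = (\<integral>\<^sup>+ x. adapt_lik f est m x * indicator A x \<partial>PiM {1..m} \<nu>)"
  proof (rule nn_integral_cong)
    fix x assume x: "x \<in> space (PiM {1..m} \<nu>)"
    have xe: "x \<in> extensional {1..m}" using x by (auto simp: space_PiM PiE_def)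
    have xM: "x \<in> space (PiM {1..<Suc m} (\<lambda>_. M))" using x spP
      by (metis atLeastLessThanSuc_atLeastAtMost)
    have "(\<integral>\<^sup>+ y. adapt_lik f est (Suc m) (x(Suc m := y)) * indicator {x \<in> space (PiM (insert (Suc m) {1..m}) \<nu>). restrict x {1..m} \<in> A} (x(Suc m := y)) \<partial>\<nu> (Suc m))
       = (\<integral>\<^sup>+ y. (adapt_lik f est m x * indicator A x) * ennreal (f (est m x) (Suc m) x y) \<partial>\<nu> (Suc m))"
    proof (rule nn_integral_cong)
      fix y assume y: "y \<in> space (\<nu> (Suc m))"
      have rx: "restrict (x(Suc m := y)) {1..m} = x"
        using xe by (auto simp: restrict_def fun_eq_iff extensional_def)
      have "x(Suc m := y) \<in> space (PiM (insert (Suc m) {1..m}) \<nu>)"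
        using x y by (auto simp: space_PiM PiE_def extensional_def Pi_def)
      then have "indicator {x \<in> space (PiM (insert (Suc m) {1..m}) \<nu>). restrict x {1..m} \<in> A} (x(Suc m := y)) = (indicator A x :: ennreal)"
        using rx by (auto simp: indicator_def)
      then show "adapt_lik f est (Suc m) (x(Suc m := y)) * indicator {x \<in> space (PiM (insert (Suc m) {1..m}) \<nu>). restrict x {1..m} \<in> A} (x(Suc m := y)) =
          (adapt_lik f est m x * indicator A x) * ennreal (f (est m x) (Suc m) x y)"
        unfolding adapt_lik_Suc[OF xe] by (simp add: mult_ac)
    qed
    also have "\<dots> = (adapt_lik f est m x * indicator A x) * (\<integral>\<^sup>+ y. ennreal (f (est m x) (Suc m) x y) \<partial>\<nu> (Suc m))"
    proof (rule nn_integral_cmult)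
      have "(\<lambda>y. (est m x, x, y)) \<in> M \<rightarrow>\<^sub>M (borel \<Otimes>\<^sub>M (PiM {1..<Suc m} (\<lambda>_. M) \<Otimes>\<^sub>M M))"
        using xM by (intro measurable_Pair measurable_const measurable_ident_sets) auto
      from measurable_compose[OF this f_meas[rule_format, of "Suc m"]]
      have "(\<lambda>y. f (est m x) (Suc m) x y) \<in> borel_measurable M" by simp
      then have "(\<lambda>y. f (est m x) (Suc m) x y) \<in> borel_measurable (\<nu> (Suc m))"
        using measurable_cong_sets[of "\<nu> (Suc m)" M borel borel] nu_sf by blast
      then show "(\<lambda>y. ennreal (f (est m x) (Suc m) x y)) \<in> borel_measurable (\<nu> (Suc m))"
        by simp
    qed
    also have "(\<integral>\<^sup>+ y. ennreal (f (est m x) (Suc m) x y) \<partial>\<nu> (Suc m)) = 1"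
      using f_cond_density est_range xM by auto
    finally show "(\<integral>\<^sup>+ y. adapt_lik f est (Suc m) (x(Suc m := y)) * indicator {x \<in> space (PiM (insert (Suc m) {1..m}) \<nu>). restrict x {1..m} \<in> A} (x(Suc m := y)) \<partial>\<nu> (Suc m))
       = adapt_lik f est m x * indicator A x" by (simp only: mult_1_right)
  qed
  also have "\<dots> = emeasure (density (PiM {1..m} \<nu>) (adapt_lik f est m)) A"
    by (rule emeasure_density[OF am Am, symmetric])
  finally show ?thesis .
qed

lemma consist:
  fixes f :: "'p::topological_space \<Rightarrow> nat \<Rightarrow> (nat \<Rightarrow> 'a) \<Rightarrow> 'a \<Rightarrow> real"
  assumes nu_sf: "\<forall>t. sigma_finite_measure (\<nu> t) \<and> sets (\<nu> t) = sets M"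
    and f_nonneg: "\<forall>\<theta> t h x. 0 \<le> f \<theta> t h x"
    and f_meas: "\<forall>t. (\<lambda>(\<theta>, h, x). f \<theta> t h x)
                   \<in> borel_measurable (borel \<Otimes>\<^sub>M (PiM {1..<t} (\<lambda>_. M) \<Otimes>\<^sub>M M))"
    and f_cond_density: "\<forall>\<theta>\<in>\<Theta>. \<forall>t. \<forall>h\<in>space (PiM {1..<t} (\<lambda>_. M)).
                   (\<integral>\<^sup>+ x. ennreal (f \<theta> t h x) \<partial>\<nu> t) = 1"
    and est_meas: "\<forall>n. est n \<in> PiM {1..n} (\<lambda>_. M) \<rightarrow>\<^sub>M borel"
    and est_range: "\<forall>n y. est n y \<in> \<Theta>"
    and nm: "n \<le> m"
  shows "A \<in> sets (PiM {1..n} (\<lambda>_. M)) \<Longrightarrow> emeasure (density (PiM {1..m} \<nu>) (adapt_lik f est m))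
            {x \<in> space (PiM {1..m} \<nu>). restrict x {1..n} \<in> A}
       = emeasure (density (PiM {1..n} \<nu>) (adapt_lik f est n)) A"
  using nm
proof (induction m arbitrary: A rule: dec_induct)
  case base
  have setsP: "sets (PiM I \<nu>) = sets (PiM I (\<lambda>_. M))" for I
    by (rule sets_PiM_cong) (use nu_sf in auto)
  have "A \<subseteq> space (PiM {1..n} \<nu>)" using base sets.sets_into_space setsP by metis
  moreover have "x \<in> space (PiM {1..n} \<nu>) \<Longrightarrow> restrict x {1..n} = x" for x
    by (auto simp: space_PiM PiE_def restrict_def extensional_def fun_eq_iff)
  ultimately have "{x \<in> space (PiM {1..n} \<nu>). restrict x {1..n} \<in> A} = A"
    by auto
  then show ?case by (simp only:)
next
  case (step m)
  have setsP: "sets (PiM I \<nu>) = sets (PiM I (\<lambda>_. M))" for I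
    by (rule sets_PiM_cong) (use nu_sf in auto)
  have spP: "space (PiM I \<nu>) = space (PiM I (\<lambda>_. M))" for I
    using sets_eq_imp_space_eq[OF setsP] .
  have r: "(\<lambda>x. restrict x {1..n}) \<in> PiM {1..m} (\<lambda>_. M) \<rightarrow>\<^sub>M PiM {1..n} (\<lambda>_. M)"
    by (rule measurable_restrict_subset) (use step in auto)
  define A' where "A' = {x \<in> space (PiM {1..m} \<nu>). restrict x {1..n} \<in> A}"
  have A': "A' \<in> sets (PiM {1..m} (\<lambda>_. M))"
    using measurable_sets[OF r step(4)] unfolding A'_def spP by (simp add: vimage_def Int_def conj_commute)
  have eq: "{x \<in> space (PiM {1..Suc m} \<nu>). restrict x {1..n} \<in> A}
      = {x \<in> space (PiM {1..Suc m} \<nu>). restrict x {1..m} \<in> A'}"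
  proof -
    have "restrict (restrict x {1..m}) {1..n} = restrict x {1..n}" for x :: "nat \<Rightarrow> 'a"
      using step(1) by (auto simp: restrict_def fun_eq_iff)
    moreover have "x \<in> space (PiM {1..Suc m} \<nu>) \<Longrightarrow> restrict x {1..m} \<in> space (PiM {1..m} \<nu>)" for x
      by (auto simp: space_PiM)
    ultimately show ?thesis unfolding A'_def by auto
  qed
  have "emeasure (density (PiM {1..Suc m} \<nu>) (adapt_lik f est (Suc m)))
            {x \<in> space (PiM {1..Suc m} \<nu>). restrict x {1..m} \<in> A'}
       = emeasure (density (PiM {1..m} \<nu>) (adapt_lik f est m)) A'"
    by (rule one_step[OF nu_sf f_nonneg f_meas f_cond_density est_meas est_range A'])
  also have "\<dots> = emeasure (density (PiM {1..n} \<nu>) (adapt_lik f est n)) A"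
    unfolding A'_def by (rule step(3)[OF step(4)])
  finally show ?case unfolding eq .
qed

lemma total_mass:
  fixes f :: "'p::topological_space \<Rightarrow> nat \<Rightarrow> (nat \<Rightarrow> 'a) \<Rightarrow> 'a \<Rightarrow> real"
  assumes nu_sf: "\<forall>t. sigma_finite_measure (\<nu> t) \<and> sets (\<nu> t) = sets M"
    and f_nonneg: "\<forall>\<theta> t h x. 0 \<le> f \<theta> t h x"
    and f_meas: "\<forall>t. (\<lambda>(\<theta>, h, x). f \<theta> t h x)
                   \<in> borel_measurable (borel \<Otimes>\<^sub>M (PiM {1..<t} (\<lambda>_. M) \<Otimes>\<^sub>M M))"
    and f_cond_density: "\<forall>\<theta>\<in>\<Theta>. \<forall>t. \<forall>h\<in>space (PiM {1..<t} (\<lambda>_. M)).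
                   (\<integral>\<^sup>+ x. ennreal (f \<theta> t h x) \<partial>\<nu> t) = 1"
    and est_meas: "\<forall>n. est n \<in> PiM {1..n} (\<lambda>_. M) \<rightarrow>\<^sub>M borel"
    and est_range: "\<forall>n y. est n y \<in> \<Theta>"
  shows "emeasure (density (PiM {1..m} \<nu>) (adapt_lik f est m)) (space (PiM {1..m} \<nu>)) = 1"
proof -
  have "emeasure (density (PiM {1..m} \<nu>) (adapt_lik f est m))
            {x \<in> space (PiM {1..m} \<nu>). restrict x {1..0} \<in> space (PiM {1..0} (\<lambda>_. M))}
       = emeasure (density (PiM {1..0} \<nu>) (adapt_lik f est 0)) (space (PiM {1..0} (\<lambda>_. M)))"
    by (rule consist[OF nu_sf f_nonneg f_meas f_cond_density est_meas est_range]) auto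
  moreover have "{x \<in> space (PiM {1..m} \<nu>). restrict x {1..0} \<in> space (PiM {1..0} (\<lambda>_. M))}
     = space (PiM {1..m} \<nu>)" by (auto simp: space_PiM_empty)
  moreover have "adapt_lik f est 0 = (\<lambda>_. 1)" by (auto simp: adapt_lik_def fun_eq_iff)
  moreover have "emeasure (density (PiM {1..0} \<nu>) (\<lambda>_. 1)) (space (PiM {1..0} (\<lambda>_. M))) = 1"
    by (simp add: PiM_empty emeasure_density_const)
  ultimately show ?thesis by simp
qed

lemma sum_le_1:
  fixes f :: "'p::topological_space \<Rightarrow> nat \<Rightarrow> (nat \<Rightarrow> 'a) \<Rightarrow> 'a \<Rightarrow> real"
  assumes nu_sf: "\<forall>t. sigma_finite_measure (\<nu> t) \<and> sets (\<nu> t) = sets M"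
    and f_nonneg: "\<forall>\<theta> t h x. 0 \<le> f \<theta> t h x"
    and f_meas: "\<forall>t. (\<lambda>(\<theta>, h, x). f \<theta> t h x)
                   \<in> borel_measurable (borel \<Otimes>\<^sub>M (PiM {1..<t} (\<lambda>_. M) \<Otimes>\<^sub>M M))"
    and f_cond_density: "\<forall>\<theta>\<in>\<Theta>. \<forall>t. \<forall>h\<in>space (PiM {1..<t} (\<lambda>_. M)).
                   (\<integral>\<^sup>+ x. ennreal (f \<theta> t h x) \<partial>\<nu> t) = 1"
    and est_meas: "\<forall>n. est n \<in> PiM {1..n} (\<lambda>_. M) \<rightarrow>\<^sub>M borel"
    and est_range: "\<forall>n y. est n y \<in> \<Theta>"
    and B: "\<And>n. B n \<in> sets (PiM {1..n} (\<lambda>_. M))"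
    and disj: "\<And>x n1 n2. n1 < n2 \<Longrightarrow> restrict x {1..n1} \<in> B n1 \<Longrightarrow> restrict x {1..n2} \<in> B n2 \<Longrightarrow> False"
  shows "(\<Sum>n. emeasure (density (PiM {1..n} \<nu>) (adapt_lik f est n)) (B n)) \<le> 1"
  unfolding suminf_eq_SUP
proof (rule SUP_least)
  fix m
  define Q where "Q = density (PiM {1..m} \<nu>) (adapt_lik f est m)"
  define C where "C n = {x \<in> space (PiM {1..m} \<nu>). restrict x {1..n} \<in> B n}" for n
  have setsP: "sets (PiM I \<nu>) = sets (PiM I (\<lambda>_. M))" for I
    by (rule sets_PiM_cong) (use nu_sf in auto)
  have spP: "space (PiM I \<nu>) = space (PiM I (\<lambda>_. M))" for I
    using sets_eq_imp_space_eq[OF setsP] .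
  have C: "C n \<in> sets Q" if "n < m" for n
  proof -
    have r: "(\<lambda>x. restrict x {1..n}) \<in> PiM {1..m} (\<lambda>_. M) \<rightarrow>\<^sub>M PiM {1..n} (\<lambda>_. M)"
      by (rule measurable_restrict_subset) (use that in auto)
    show ?thesis
      using measurable_sets[OF r B[of n]] unfolding C_def Q_def spP sets_density setsP
      by (simp add: vimage_def Int_def conj_commute)
  qed
  have "(\<Sum>i<m. emeasure (density (PiM {1..i} \<nu>) (adapt_lik f est i)) (B i)) = (\<Sum>i<m. emeasure Q (C i))"
    unfolding Q_def C_def
    by (rule sum.cong[OF refl], rule consist[OF nu_sf f_nonneg f_meas f_cond_density est_meas est_range, symmetric]) (use B in auto)
  also have "\<dots> = emeasure Q (\<Union>i\<in>{..<m}. C i)"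
    apply (rule sum_emeasure)
    using C apply auto[1]
     apply (auto simp: disjoint_family_on_def C_def)
    subgoal for i j x
      using disj[of i j x] disj[of j i x] by (cases "i < j") auto
    done
  also have "\<dots> \<le> emeasure Q (space Q)" by (rule emeasure_space)
  also have "\<dots> = 1" unfolding Q_def
    using total_mass[OF nu_sf f_nonneg f_meas f_cond_density est_meas est_range] by simp
  finally show "(\<Sum>i<m. emeasure (density (PiM {1..i} \<nu>) (adapt_lik f est i)) (B i)) \<le> 1" .
qed

lemma key_enn:
  fixes A s l c :: ennreal
  assumes "0 < c" "c \<le> A / s" "l \<le> s" "A < top"
  shows "c * l \<le> A"
proof (cases "s = 0")
  case True then show ?thesis using assms by simp
next
  case s0: False
  show ?thesis
  proof (cases "s = top")
    case True
    then have As: "A / s = 0" by simp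
    from assms(2) have "c \<le> 0" unfolding As .
    with assms(1) show ?thesis by simp
  next
    case False
    have "c * s \<le> A / s * s" using assms by (simp add: mult_right_mono)
    also have "A / s * s = A" using s0 False by (simp add: ennreal_divide_times top.not_eq_extremum)
    finally have "c * s \<le> A" .
    moreover have "c * l \<le> c * s" using assms by (simp add: mult_left_mono)
    ultimately show ?thesis by simp
  qed
qed

lemma ln_ennreal_ge:
  assumes "ereal r \<le> ln_ennreal y" shows "ennreal (exp r) \<le> y"
proof -
  consider "y = 0" | "y = top" | "y \<noteq> 0" "y \<noteq> top" by blast
  then show ?thesis
  proof cases
    case 1 then show ?thesis using assms by (simp add: ln_ennreal_def)
  next
    case 2 then show ?thesis by simp
  next
    case 3
    then have "r \<le> ln (enn2real y)" using assms by (simp add: ln_ennreal_def)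
    moreover have "0 < enn2real y" using 3 by (simp add: enn2real_positive_iff less_top[symmetric] zero_less_iff_neq_zero)
    ultimately have "exp r \<le> enn2real y" by (metis exp_le_cancel_iff exp_ln)
    then have "ennreal (exp r) \<le> ennreal (enn2real y)" by simp
    also have "\<dots> = y" using 3 by (simp add: less_top)
    finally show ?thesis .
  qed
qed

lemma decision:
  assumes "amsprt_T f est \<Theta>s N a x < \<infinity>" "amsprt_d tb f est \<Theta>s N a x = j"
    and tb_rule: "\<forall>S. S \<noteq> {} \<longrightarrow> tb S \<in> S"
  shows "j \<in> {0..N} \<and> (\<exists>n\<ge>1. \<forall>j'\<in>{0..N}-{j}. lambda_hat f est (\<Theta>s j') n x \<ge> ereal (a j' j))"
proof -
  define T where "T = amsprt_T f est \<Theta>s N a x"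
  define S where "S = {k\<in>{0..N}. amsprt_Ti f est \<Theta>s N a k x = T}"
  have "T \<in> (\<lambda>k. amsprt_Ti f est \<Theta>s N a k x) ` {0..N}"
    unfolding T_def amsprt_T_def by (rule Min_in) auto
  then obtain k where "k \<in> {0..N}" "amsprt_Ti f est \<Theta>s N a k x = T" by (rule imageE) simp
  then have "k \<in> S" unfolding S_def by simp
  then have "S \<noteq> {}" by blast
  then have "tb S \<in> S" using tb_rule by simp
  moreover have "tb S = j" using assms(2) unfolding S_def T_def amsprt_d_def by simp
  ultimately have "j \<in> S" by simp
  then have j: "j \<in> {0..N}" "amsprt_Ti f est \<Theta>s N a j x = T" unfolding S_def by simp_all
  define Z where "Z = {n. 1 \<le> n \<and> (\<forall>j'\<in>{0..N} - {j}. lambda_hat f est (\<Theta>s j') n x \<ge> ereal (a j' j))}"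
  have "Z \<noteq> {}"
  proof
    assume Z: "Z = {}"
    have "amsprt_Ti f est \<Theta>s N a j x = (INF n\<in>Z. enat n)" unfolding amsprt_Ti_def Z_def ..
    also have "\<dots> = \<infinity>" unfolding Z by (simp add: top_enat_def)
    finally show False using j assms(1) unfolding T_def by simp
  qed
  then obtain n where "n \<in> Z" by blast
  then show ?thesis using j(1) unfolding Z_def by blast
qed

theorem lemma2:
  fixes P :: "real^'l \<Rightarrow> 'o measure"
    and X :: "nat \<Rightarrow> 'o \<Rightarrow> 'a"
    and M :: "'a measure"
    and \<nu> :: "nat \<Rightarrow> 'a measure"
    and f :: "real^'l \<Rightarrow> nat \<Rightarrow> (nat \<Rightarrow> 'a) \<Rightarrow> 'a \<Rightarrow> real"
    and \<Theta> \<Theta>in :: "(real^'l) set"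
    and \<Theta>s :: "nat \<Rightarrow> (real^'l) set"
    and N :: nat
    and est :: "nat \<Rightarrow> (nat \<Rightarrow> 'a) \<Rightarrow> real^'l"
    and a :: "nat \<Rightarrow> nat \<Rightarrow> real"
    and tb :: "nat set \<Rightarrow> nat"
  assumes N_ge: "N \<ge> 1"
    and Theta_union: "\<Theta> = \<Theta>in \<union> (\<Union>i\<in>{0..N}. \<Theta>s i)"
    and Theta_disj: "\<forall>i\<in>{0..N}. \<forall>j\<in>{0..N}. i \<noteq> j \<longrightarrow> \<Theta>s i \<inter> \<Theta>s j = {}"
    and Theta_in_disj: "\<forall>i\<in>{0..N}. \<Theta>s i \<inter> \<Theta>in = {}"
    and prob: "\<forall>\<theta>\<in>\<Theta>. prob_space (P \<theta>)"
    and X_meas: "\<forall>\<theta>\<in>\<Theta>. \<forall>t. X t \<in> P \<theta> \<rightarrow>\<^sub>M M"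
    and nu_sf: "\<forall>t. sigma_finite_measure (\<nu> t) \<and> sets (\<nu> t) = sets M"
    and f_nonneg: "\<forall>\<theta> t h x. 0 \<le> f \<theta> t h x"
    and f_meas: "\<forall>t. (\<lambda>(\<theta>, h, x). f \<theta> t h x)
                   \<in> borel_measurable (borel \<Otimes>\<^sub>M (PiM {1..<t} (\<lambda>_. M) \<Otimes>\<^sub>M M))"
    and f_cond_density: "\<forall>\<theta>\<in>\<Theta>. \<forall>t. \<forall>h\<in>space (PiM {1..<t} (\<lambda>_. M)).
                   (\<integral>\<^sup>+ x. ennreal (f \<theta> t h x) \<partial>\<nu> t) = 1"
    and density: "\<forall>\<theta>\<in>\<Theta>. \<forall>n. distr (P \<theta>) (PiM {1..n} (\<lambda>_. M)) (\<lambda>\<omega>. restrict (\<lambda>t. X t \<omega>) {1..n})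
                   = density (PiM {1..n} \<nu>) (lik f \<theta> n)"
    and mutual_ac: "\<forall>\<theta>\<in>\<Theta>. \<forall>\<theta>'\<in>\<Theta>. \<forall>n.
                   absolutely_continuous (distr (P \<theta>') (PiM {1..n} (\<lambda>_. M)) (\<lambda>\<omega>. restrict (\<lambda>t. X t \<omega>) {1..n}))
                     (distr (P \<theta>) (PiM {1..n} (\<lambda>_. M)) (\<lambda>\<omega>. restrict (\<lambda>t. X t \<omega>) {1..n}))"
    and est_meas: "\<forall>n. est n \<in> PiM {1..n} (\<lambda>_. M) \<rightarrow>\<^sub>M borel"
    and est_range: "\<forall>n y. est n y \<in> \<Theta>"
    and sup_meas: "\<forall>i\<in>{0..N}. \<forall>n. (\<lambda>x. SUP \<theta>\<in>\<Theta>s i. lik f \<theta> n x) \<in> borel_measurable (PiM {1..n} (\<lambda>_. M))"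
    and tb_rule: "\<forall>S. S \<noteq> {} \<longrightarrow> tb S \<in> S"
  shows "(\<forall>i\<in>{0..N}. \<forall>j\<in>{0..N}. i \<noteq> j \<longrightarrow>
            (SUP \<theta>\<in>\<Theta>s i. emeasure (P \<theta>)
               {\<omega>\<in>space (P \<theta>). amsprt_T f est \<Theta>s N a (\<lambda>t. X t \<omega>) < \<infinity>
                               \<and> amsprt_d tb f est \<Theta>s N a (\<lambda>t. X t \<omega>) = j})
            \<le> ennreal (exp (- a i j)))
         \<and> (\<forall>\<alpha>. (\<forall>i\<in>{0..N}. \<forall>j\<in>{0..N}. i \<noteq> j \<longrightarrow> 0 < \<alpha> i j \<and> a i j = ln (1 / \<alpha> i j)) \<longrightarrow>
              in_class P \<Theta>s N \<alpha> (\<lambda>\<omega>. amsprt_T f est \<Theta>s N a (\<lambda>t. X t \<omega>))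
                                 (\<lambda>\<omega>. amsprt_d tb f est \<Theta>s N a (\<lambda>t. X t \<omega>)))"
proof -
  have setsP: "sets (PiM I \<nu>) = sets (PiM I (\<lambda>_. M))" for I
    by (rule sets_PiM_cong) (use nu_sf in auto)
  have spP: "space (PiM I \<nu>) = space (PiM I (\<lambda>_. M))" for I
    using sets_eq_imp_space_eq[OF setsP] .
  have measP: "g \<in> borel_measurable (PiM I \<nu>) \<longleftrightarrow> g \<in> borel_measurable (PiM I (\<lambda>_. M))" for g :: "_ \<Rightarrow> ennreal" and I
    using measurable_cong_sets[OF setsP refl] by blast
  have main: "emeasure (P \<theta>)
               {\<omega>\<in>space (P \<theta>). amsprt_T f est \<Theta>s N a (\<lambda>t. X t \<omega>) < \<infinity>
                               \<and> amsprt_d tb f est \<Theta>s N a (\<lambda>t. X t \<omega>) = j}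
            \<le> ennreal (exp (- a i j))"
    if i: "i \<in> {0..N}" and j: "j \<in> {0..N}" and ij: "i \<noteq> j" and th: "\<theta> \<in> \<Theta>s i" for i j \<theta>
  proof -
    have thT: "\<theta> \<in> \<Theta>" using Theta_union i th by auto
    define e where "e = ennreal (exp (- a i j))"
    define c where "c = ennreal (exp (a i j))"
    have ec: "e * c = 1" unfolding e_def c_def
      by (simp add: ennreal_mult[symmetric] exp_minus_inverse mult_exp_exp)
    have c0: "0 < c" unfolding c_def by simp
    define L where "L k x = Lambda_hat f est (\<Theta>s i) k x" for k x
    define B where "B n = {x \<in> space (PiM {1..n} (\<lambda>_. M)). 1 \<le> n \<and> c \<le> L n (restrict x {1..n})
        \<and> (\<forall>k\<in>{1..<n}. \<not> c \<le> L k (restrict x {1..k}))}" for n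
    have Lm0: "L k \<in> borel_measurable (PiM {1..k} (\<lambda>_. M))" for k
      unfolding L_def[abs_def] Lambda_hat_def
      by (intro borel_measurable_divide_ennreal adapt_lik_meas[OF f_meas est_meas])
         (use sup_meas i in auto)
    have Lm: "(\<lambda>x. L k (restrict x {1..k})) \<in> borel_measurable (PiM {1..n} (\<lambda>_. M))" if "k \<le> n" for k n
      by (rule measurable_compose[OF measurable_restrict_subset Lm0]) (use that in auto)
    have Bs: "B n \<in> sets (PiM {1..n} (\<lambda>_. M))" for n
    proof -
      have "Measurable.pred (PiM {1..n} (\<lambda>_. M)) (\<lambda>x. 1 \<le> n \<and> c \<le> L n (restrict x {1..n})
        \<and> (\<forall>k\<in>{1..<n}. \<not> c \<le> L k (restrict x {1..k})))"
        by (intro pred_intros_logic pred_intros_finite pred_const_le[OF Lm] measurable_const) auto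
      then show ?thesis unfolding B_def pred_def .
    qed
    have disj: "False" if "n1 < n2" "restrict x {1..n1} \<in> B n1" "restrict x {1..n2} \<in> B n2" for x n1 n2
    proof -
      have "c \<le> L n1 (restrict x {1..n1})" using that(2) unfolding B_def by simp
      moreover have "\<not> c \<le> L n1 (restrict x {1..n1})"
        using that unfolding B_def by (auto simp: Int_absorb1)
      ultimately show False by simp
    qed
    have Ym: "(\<lambda>\<omega>. restrict (\<lambda>t. X t \<omega>) {1..n}) \<in> P \<theta> \<rightarrow>\<^sub>M PiM {1..n} (\<lambda>_. M)" for n
      by (rule measurable_restrict) (use X_meas thT in auto)
    define G where "G n = {\<omega> \<in> space (P \<theta>). restrict (\<lambda>t. X t \<omega>) {1..n} \<in> B n}" for n
    have Gs: "G n \<in> sets (P \<theta>)" for n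
      using measurable_sets[OF Ym Bs] unfolding G_def by (simp add: vimage_def Int_def conj_commute)
    have sub: "{\<omega>\<in>space (P \<theta>). amsprt_T f est \<Theta>s N a (\<lambda>t. X t \<omega>) < \<infinity>
                               \<and> amsprt_d tb f est \<Theta>s N a (\<lambda>t. X t \<omega>) = j} \<subseteq> (\<Union>n. G n)"
    proof
      fix \<omega> assume \<omega>: "\<omega> \<in> {\<omega>\<in>space (P \<theta>). amsprt_T f est \<Theta>s N a (\<lambda>t. X t \<omega>) < \<infinity>
                               \<and> amsprt_d tb f est \<Theta>s N a (\<lambda>t. X t \<omega>) = j}"
      define x where "x = (\<lambda>t. X t \<omega>)"
      have \<omega>s: "\<omega> \<in> space (P \<theta>)" using \<omega> by simp
      from decision[of f est \<Theta>s N a x tb j] \<omega> tb_rule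
      obtain n where n: "1 \<le> n" "\<forall>j'\<in>{0..N}-{j}. lambda_hat f est (\<Theta>s j') n x \<ge> ereal (a j' j)"
        unfolding x_def by auto
      have "lambda_hat f est (\<Theta>s i) n x \<ge> ereal (a i j)" using n(2) i ij by auto
      then have "c \<le> L n x" unfolding c_def L_def lambda_hat_def by (rule ln_ennreal_ge)
      define n0 where "n0 = (LEAST n. 1 \<le> n \<and> c \<le> L n x)"
      have n0: "1 \<le> n0" "c \<le> L n0 x" using LeastI[of "\<lambda>n. 1 \<le> n \<and> c \<le> L n x" n] n(1) \<open>c \<le> L n x\<close>
        unfolding n0_def by auto
      have n0min: "\<not> c \<le> L k x" if "1 \<le> k" "k < n0" for k
        using not_less_Least[of k "\<lambda>n. 1 \<le> n \<and> c \<le> L n x"] that unfolding n0_def by auto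
      have Lr: "L k (restrict x {1..k}) = L k x" for k
        unfolding L_def by (rule Lambda_hat_restrict) simp
      have "restrict x {1..n0} \<in> space (PiM {1..n0} (\<lambda>_. M))"
        using measurable_space[OF X_meas[rule_format, OF thT] \<omega>s] unfolding x_def by (auto simp: space_PiM)
      moreover have "c \<le> L n0 (restrict (restrict x {1..n0}) {1..n0})"
        using n0 Lr by simp
      moreover have "\<forall>k\<in>{1..<n0}. \<not> c \<le> L k (restrict (restrict x {1..n0}) {1..k})"
        using n0min Lr by (auto simp: Int_absorb1)
      ultimately have "restrict x {1..n0} \<in> B n0" unfolding B_def using n0 by simp
      then have "\<omega> \<in> G n0" unfolding G_def x_def using \<omega>s by simp
      then show "\<omega> \<in> (\<Union>n. G n)" by blast
    qed
    have am: "adapt_lik f est n \<in> borel_measurable (PiM {1..n} \<nu>)" for n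
      using adapt_lik_meas[OF f_meas est_meas] measP by blast
    have lm: "lik f \<theta> n \<in> borel_measurable (PiM {1..n} \<nu>)" for n
      using lik_meas[OF f_meas] measP by blast
    have BsP: "B n \<in> sets (PiM {1..n} \<nu>)" for n using Bs setsP by simp
    have Gb: "emeasure (P \<theta>) (G n) \<le> e * emeasure (density (PiM {1..n} \<nu>) (adapt_lik f est n)) (B n)" for n
    proof -
      have "emeasure (P \<theta>) (G n) = emeasure (distr (P \<theta>) (PiM {1..n} (\<lambda>_. M)) (\<lambda>\<omega>. restrict (\<lambda>t. X t \<omega>) {1..n})) (B n)"
        unfolding G_def by (subst emeasure_distr[OF Ym Bs]) (simp add: vimage_def Int_def conj_commute)
      also have "\<dots> = emeasure (density (PiM {1..n} \<nu>) (lik f \<theta> n)) (B n)"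
        using density thT by (simp only:)
      also have "\<dots> = (\<integral>\<^sup>+ x. lik f \<theta> n x * indicator (B n) x \<partial>PiM {1..n} \<nu>)"
        by (rule emeasure_density[OF lm BsP])
      also have "\<dots> \<le> (\<integral>\<^sup>+ x. e * (adapt_lik f est n x * indicator (B n) x) \<partial>PiM {1..n} \<nu>)"
      proof (rule nn_integral_mono)
        fix x assume xs: "x \<in> space (PiM {1..n} \<nu>)"
        show "lik f \<theta> n x * indicator (B n) x \<le> e * (adapt_lik f est n x * indicator (B n) x)"
        proof (cases "x \<in> B n")
          case False then show ?thesis by simp
        next
          case True
          have "x \<in> extensional {1..n}" using xs by (auto simp: space_PiM PiE_def)
          then have rx: "restrict x {1..n} = x" by (auto simp: restrict_def extensional_def fun_eq_iff)
          have cL: "c \<le> adapt_lik f est n x / (SUP \<theta>\<in>\<Theta>s i. lik f \<theta> n x)"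
            using True rx unfolding B_def L_def Lambda_hat_def by simp
          have fin: "adapt_lik f est n x < top" unfolding adapt_lik_def
            by (subst prod_ennreal) (use f_nonneg in auto)
          have "c * lik f \<theta> n x \<le> adapt_lik f est n x"
            by (rule key_enn[OF c0 cL SUP_upper[OF th] fin])
          then have "e * (c * lik f \<theta> n x) \<le> e * adapt_lik f est n x" by (rule mult_left_mono) simp
          then have "lik f \<theta> n x \<le> e * adapt_lik f est n x"
            by (simp add: mult.assoc[symmetric] ec)
          then show ?thesis using True by simp
        qed
      qed
      also have "\<dots> = e * (\<integral>\<^sup>+ x. adapt_lik f est n x * indicator (B n) x \<partial>PiM {1..n} \<nu>)"
        by (rule nn_integral_cmult) (use am BsP in simp)
      also have "\<dots> = e * emeasure (density (PiM {1..n} \<nu>) (adapt_lik f est n)) (B n)"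
        unfolding emeasure_density[OF am BsP] ..
      finally show ?thesis .
    qed
    have "emeasure (P \<theta>)
               {\<omega>\<in>space (P \<theta>). amsprt_T f est \<Theta>s N a (\<lambda>t. X t \<omega>) < \<infinity>
                               \<and> amsprt_d tb f est \<Theta>s N a (\<lambda>t. X t \<omega>) = j}
          \<le> emeasure (P \<theta>) (\<Union>n. G n)"
      by (rule emeasure_mono[OF sub]) (use Gs in auto)
    also have "\<dots> \<le> (\<Sum>n. emeasure (P \<theta>) (G n))"
      by (rule emeasure_subadditive_countably) (use Gs in auto)
    also have "\<dots> \<le> (\<Sum>n. e * emeasure (density (PiM {1..n} \<nu>) (adapt_lik f est n)) (B n))"
      by (rule suminf_le[OF Gb summableI summableI])
    also have "\<dots> = e * (\<Sum>n. emeasure (density (PiM {1..n} \<nu>) (adapt_lik f est n)) (B n))"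
      by simp
    also have "\<dots> \<le> e * 1"
      by (rule mult_left_mono[OF sum_le_1[OF nu_sf f_nonneg f_meas f_cond_density est_meas est_range Bs]]) (use disj in blast, simp)
    finally show ?thesis unfolding e_def by simp
  qed
  have part1: "\<forall>i\<in>{0..N}. \<forall>j\<in>{0..N}. i \<noteq> j \<longrightarrow>
            (SUP \<theta>\<in>\<Theta>s i. emeasure (P \<theta>)
               {\<omega>\<in>space (P \<theta>). amsprt_T f est \<Theta>s N a (\<lambda>t. X t \<omega>) < \<infinity>
                               \<and> amsprt_d tb f est \<Theta>s N a (\<lambda>t. X t \<omega>) = j})
            \<le> ennreal (exp (- a i j))"
    using main by (intro ballI impI SUP_least) blast
  show ?thesis
  proof (intro conjI allI impI part1)
    fix \<alpha> :: "nat \<Rightarrow> nat \<Rightarrow> real"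
    assume al: "\<forall>i\<in>{0..N}. \<forall>j\<in>{0..N}. i \<noteq> j \<longrightarrow> 0 < \<alpha> i j \<and> a i j = ln (1 / \<alpha> i j)"
    have ea: "exp (- a i j) = \<alpha> i j" if "i \<in> {0..N}" "j \<in> {0..N}" "i \<noteq> j" for i j
    proof -
      have "0 < \<alpha> i j" "a i j = ln (1 / \<alpha> i j)" using al that by auto
      then show ?thesis by (simp add: ln_div)
    qed
    then show "in_class P \<Theta>s N \<alpha> (\<lambda>\<omega>. amsprt_T f est \<Theta>s N a (\<lambda>t. X t \<omega>))
                                 (\<lambda>\<omega>. amsprt_d tb f est \<Theta>s N a (\<lambda>t. X t \<omega>))"
      unfolding in_class_def
    proof (intro ballI impI)
      fix i j assume ijs: "i \<in> {0..N}" "j \<in> {0..N}" "i \<noteq> j"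
      have pi: "(SUP \<theta>\<in>\<Theta>s i. emeasure (P \<theta>)
               {\<omega>\<in>space (P \<theta>). amsprt_T f est \<Theta>s N a (\<lambda>t. X t \<omega>) < \<infinity>
                               \<and> amsprt_d tb f est \<Theta>s N a (\<lambda>t. X t \<omega>) = j}) \<le> ennreal (exp (- a i j))"
        using part1 ijs by blast
      show "(SUP \<theta>\<in>\<Theta>s i. emeasure (P \<theta>)
               {\<omega>\<in>space (P \<theta>). amsprt_T f est \<Theta>s N a (\<lambda>t. X t \<omega>) < \<infinity>
                               \<and> amsprt_d tb f est \<Theta>s N a (\<lambda>t. X t \<omega>) = j}) \<le> ennreal (\<alpha> i j)"
        using pi unfolding ea[OF ijs] .
    qed
  qed
qed

end
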